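(* Let $\mathcal{S}$ be a set of sum indecomposable permutations that is downward closed among indecomposables (if $\sigma\in\mathcal{S}$, $\tau$ is a subpermutation of $\sigma$ and $\tau$ is indecomposable, then $\tau\in\mathcal{S}$), and suppose there is a constant $c$ with $1\leq|\mathcal{S}_n|\leq c$ for all $n\geq1$. Then the growth rate $\lim_{n\to\infty}|(\bigoplus\mathcal{S})_n|^{1/n}$ of the sum closure $\bigoplus\mathcal{S}$ exists and equals the unique real $\gamma>1$ satisfying $$\sum_{n=1}^\infty|\mathcal{S}_n|\,\gamma^{-n}=1.$$
   Context: A permutation of length $n$ is a sequence containing each element of $\{1,\dots,n\}$ exactly once; $\tau$ is a subpermutation of $\sigma$ if some subsequence of $\sigma$ has the same relative order as $\tau$. For a set of permutations $\mathcal{S}$, $\mathcal{S}_n$ is the set of its members of length $n$. The direct sum of $\sigma$ (length $k$) and $\tau$ (length $\ell$) is the permutation $\sigma\oplus\tau$ of length $k+\ell$ with $(\sigma\oplus\tau)(i)=\sigma(i)$ for $i\leq k$ and $(\sigma\oplus\tau)(i)=k+\tau(i-k)$ for $k<i\leq k+\ell$. A permutation is (sum) indecomposable if it is not the direct sum of two shorter permutations. The sum closure $\bigoplus\mathcal{S}$ is the set of all permutations $\sigma_1\oplus\cdots\oplus\sigma_r$ ($r\geq1$) with each $\sigma_i\in\mathcal{S}$. *)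

theory Defs
  imports Complex_Main
begin

definition is_perm :: "nat list \<Rightarrow> bool" where
  "is_perm xs \<longleftrightarrow> distinct xs \<and> set xs = {1..length xs}"

definition order_iso :: "nat list \<Rightarrow> nat list \<Rightarrow> bool" where
  "order_iso xs ys \<longleftrightarrow> length xs = length ys \<and>
     (\<forall>i < length xs. \<forall>j < length xs. (xs ! i < xs ! j) \<longleftrightarrow> (ys ! i < ys ! j))"

definition subperm :: "nat list \<Rightarrow> nat list \<Rightarrow> bool" where
  "subperm tau sigma \<longleftrightarrow> (\<exists>I. order_iso tau (nths sigma I))"

definition dsum :: "nat list \<Rightarrow> nat list \<Rightarrow> nat list" where
  "dsum s t = s @ map (\<lambda>x. x + length s) t"

definition indecomposable :: "nat list \<Rightarrow> bool" where
  "indecomposable sigma \<longleftrightarrow> \<not> (\<exists>a b. is_perm a \<and> is_perm b \<and>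
      length a < length sigma \<and> length b < length sigma \<and> sigma = dsum a b)"

definition sum_closure :: "nat list set \<Rightarrow> nat list set" where
  "sum_closure S = {foldr dsum ss [] | ss. ss \<noteq> [] \<and> set ss \<subseteq> S}"

definition level :: "nat list set \<Rightarrow> nat \<Rightarrow> nat list set" where
  "level S n = {sigma \<in> S. length sigma = n}"

end

theory Submission imports Defs begin

lemma length_dsum[simp]: "length (dsum a b) = length a + length b"
  by (simp add: dsum_def)

lemma dsum_Nil2[simp]: "dsum a [] = a" and dsum_Nil1[simp]: "dsum [] b = b"
  by (simp_all add: dsum_def)

lemma is_perm_dsum:
  assumes "is_perm a" "is_perm b" shows "is_perm (dsum a b)"
proof -
  have da: "distinct a" "set a = {1..length a}" and db: "distinct b" "set b = {1..length b}"
    using assms by (auto simp: is_perm_def)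
  have inj: "inj_on (\<lambda>x. x + length a) (set b)" by (auto simp: inj_on_def)
  have "set (map (\<lambda>x. x + length a) b) = (\<lambda>x. x + length a) ` {1..length b}"
    using db by simp
  also have "\<dots> = {length a + 1..length a + length b}"
    by (auto simp: image_iff intro!: exI[where x="_ - length a"])
  finally have s: "set (map (\<lambda>x. x + length a) b) = {length a + 1..length a + length b}" .
  show ?thesis unfolding is_perm_def dsum_def
    using da db s by (auto simp: distinct_map inj)
qed

lemma is_perm_foldr:
  assumes "\<forall>x\<in>set ss. is_perm x" shows "is_perm (foldr dsum ss [])"
  using assms by (induction ss) (simp_all add: is_perm_dsum, simp add: is_perm_def)

lemma first_block:
  assumes pa: "is_perm a" and pa': "is_perm a'" and ind: "indecomposable a'"
    and ne: "a \<noteq> []" and lt: "length a < length a'" and pb: "is_perm b"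
    and eq: "dsum a b = dsum a' b'"
  shows False
proof -
  define m where "m = length a' - length a"
  define c where "c = take m b"
  have "length a' \<le> length (dsum a b)" using eq by simp
  hence mb: "m \<le> length b" using lt by (simp add: m_def)
  have "take (length a') (dsum a b) = a'" using eq by (simp add: dsum_def)
  moreover have "take (length a') (dsum a b) = a @ map (\<lambda>x. x + length a) c"
    using lt by (simp add: dsum_def c_def m_def take_map)
  ultimately have a'eq: "a' = a @ map (\<lambda>x. x + length a) c" by simp
  have lc: "length c = m" using mb by (simp add: c_def)
  have dc: "distinct c" using pb by (simp add: c_def is_perm_def)
  have sa: "set a = {1..length a}" using pa by (simp add: is_perm_def)
  have sa': "set a' = {1..length a'}" and da': "distinct a'" using pa' by (auto simp: is_perm_def)
  have disj: "set a \<inter> (\<lambda>x. x + length a) ` set c = {}" using da' a'eq by simp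
  have sc: "set c = {1..m}"
  proof
    show "set c \<subseteq> {1..m}"
    proof
      fix x assume x: "x \<in> set c"
      hence "x + length a \<in> set a'" using a'eq by simp
      hence "x + length a \<le> length a'" using sa' by auto
      moreover have "x + length a \<notin> set a" using disj x by auto
      hence "x \<noteq> 0" using sa ne by (auto)
      ultimately show "x \<in> {1..m}" by (simp add: m_def)
    qed
  next
    show "{1..m} \<subseteq> set c"
    proof
      fix x assume x: "x \<in> {1..m}"
      hence "x + length a \<in> set a'" using sa' by (auto simp: m_def)
      moreover have "x + length a \<notin> set a" using sa x by auto
      ultimately have "x + length a \<in> (\<lambda>x. x + length a) ` set c" using a'eq by simp
      thus "x \<in> set c" by auto
    qed
  qed
  have "is_perm c" using dc sc lc by (simp add: is_perm_def)
  moreover have "a' = dsum a c" using a'eq by (simp add: dsum_def)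
  moreover have "length c < length a'" using lc ne lt by (simp add: m_def length_greater_0_conv[symmetric] del: length_greater_0_conv)
  ultimately show False using ind pa lt unfolding indecomposable_def by blast
qed

lemma dsum_unique:
  assumes "is_perm a" "is_perm a'" "indecomposable a" "indecomposable a'"
    "a \<noteq> []" "a' \<noteq> []" "is_perm b" "is_perm b'" "dsum a b = dsum a' b'"
  shows "a = a' \<and> b = b'"
proof -
  have "\<not> length a < length a'" using first_block assms by blast
  moreover have "\<not> length a' < length a" using first_block[of a' a b' b] assms by metis
  ultimately have l: "length a = length a'" by simp
  have "take (length a) (dsum a b) = a" "take (length a) (dsum a' b') = a'"
    using l by (simp_all add: dsum_def)
  hence aa: "a = a'" using assms(9) by simp
  have "map (\<lambda>x. x + length a) b = map (\<lambda>x. x + length a) b'"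
    using assms(9) aa by (simp add: dsum_def)
  hence "b = b'" by (simp add: inj_map_eq_map inj_on_def)
  thus ?thesis using aa by simp
qed

lemma closure_struct:
  assumes "ss \<noteq> []" "set ss \<subseteq> S" "foldr dsum ss [] \<noteq> []"
  shows "foldr dsum ss [] \<in> S \<or> (\<exists>a\<in>S. \<exists>b\<in>sum_closure S. a \<noteq> [] \<and> b \<noteq> [] \<and> foldr dsum ss [] = dsum a b)"
  using assms
proof (induction ss)
  case Nil thus ?case by simp
next
  case (Cons x ys)
  show ?case
  proof (cases "ys = []")
    case True thus ?thesis using Cons by simp
  next
    case False
    have yc: "foldr dsum ys [] \<in> sum_closure S" using False Cons.prems
      unfolding sum_closure_def by auto
    show ?thesis
    proof (cases "x = []")
      case True
      thus ?thesis using Cons False by simp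
    next
      case xne: False
      show ?thesis
      proof (cases "foldr dsum ys [] = []")
        case True thus ?thesis using Cons.prems by simp
      next
        case False thus ?thesis using xne yc Cons.prems by auto
      qed
    qed
  qed
qed

lemma closure_cons: "a \<in> S \<Longrightarrow> b \<in> sum_closure S \<Longrightarrow> dsum a b \<in> sum_closure S"
  unfolding sum_closure_def
proof clarify
  fix ss assume "a \<in> S" "ss \<noteq> []" "set ss \<subseteq> S"
  thus "\<exists>ss'. dsum a (foldr dsum ss []) = foldr dsum ss' [] \<and> ss' \<noteq> [] \<and> set ss' \<subseteq> S"
    by (intro exI[where x="a # ss"]) auto
qed

lemma closure_single: "a \<in> S \<Longrightarrow> a \<in> sum_closure S"
  unfolding sum_closure_def by (auto intro!: exI[where x="[a]"])


lemma closure_perm: "\<forall>s\<in>S. is_perm s \<Longrightarrow> x \<in> sum_closure S \<Longrightarrow> is_perm x"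
  unfolding sum_closure_def by (auto intro!: is_perm_foldr)

lemma level_closure_eq:
  assumes n: "n \<ge> 1"
  shows "level (sum_closure S) n = level S n \<union>
     (\<Union>k\<in>{1..<n}. (\<lambda>(a,b). dsum a b) ` (level S k \<times> level (sum_closure S) (n-k)))"
proof
  show "level (sum_closure S) n \<subseteq> level S n \<union>
     (\<Union>k\<in>{1..<n}. (\<lambda>(a,b). dsum a b) ` (level S k \<times> level (sum_closure S) (n-k)))"
  proof
    fix x assume x: "x \<in> level (sum_closure S) n"
    then obtain ss where ss: "x = foldr dsum ss []" "ss \<noteq> []" "set ss \<subseteq> S" and lx: "length x = n"
      by (auto simp: level_def sum_closure_def)
    have "x \<noteq> []" using lx n by auto
    from closure_struct[OF ss(2,3)] this ss(1)
    have "x \<in> S \<or> (\<exists>a\<in>S. \<exists>b\<in>sum_closure S. a \<noteq> [] \<and> b \<noteq> [] \<and> x = dsum a b)" by simp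
    thus "x \<in> level S n \<union>
     (\<Union>k\<in>{1..<n}. (\<lambda>(a,b). dsum a b) ` (level S k \<times> level (sum_closure S) (n-k)))"
    proof
      assume "x \<in> S" thus ?thesis using lx by (simp add: level_def)
    next
      assume "\<exists>a\<in>S. \<exists>b\<in>sum_closure S. a \<noteq> [] \<and> b \<noteq> [] \<and> x = dsum a b"
      then obtain a b where ab: "a \<in> S" "b \<in> sum_closure S" "a \<noteq> []" "b \<noteq> []" "x = dsum a b" by blast
      have "length a \<in> {1..<n}" using ab lx by (auto simp: Suc_le_eq)
      moreover have "(a, b) \<in> level S (length a) \<times> level (sum_closure S) (n - length a)"
        using ab lx by (auto simp: level_def)
      ultimately show ?thesis using ab(5) by blast
    qed
  qed
next
  show "level S n \<union>
     (\<Union>k\<in>{1..<n}. (\<lambda>(a,b). dsum a b) ` (level S k \<times> level (sum_closure S) (n-k)))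
    \<subseteq> level (sum_closure S) n"
    by (auto simp: level_def closure_single closure_cons)
qed

lemma card_level_closure:
  assumes indec: "\<forall>s\<in>S. is_perm s \<and> indecomposable s"
    and n: "n \<ge> 1"
    and finS: "\<And>k. k \<ge> 1 \<Longrightarrow> finite (level S k)"
    and finC: "\<And>m. m \<ge> 1 \<Longrightarrow> m < n \<Longrightarrow> finite (level (sum_closure S) m)"
  shows "finite (level (sum_closure S) n) \<and> card (level (sum_closure S) n) = card (level S n) +
     (\<Sum>k\<in>{1..<n}. card (level S k) * card (level (sum_closure S) (n-k)))"
proof -
  let ?C = "sum_closure S"
  let ?A = "\<lambda>k. (\<lambda>(a,b). dsum a b) ` (level S k \<times> level ?C (n-k))"
  have permS: "\<forall>s\<in>S. is_perm s" using indec by blast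
  have uniq: "a = a' \<and> b = b'" if "a \<in> S" "a' \<in> S" "a \<noteq> []" "a' \<noteq> []" "is_perm b" "is_perm b'"
     "dsum a b = dsum a' b'" for a a' b b'
    using dsum_unique[of a a' b b'] that indec by blast
  have finA: "finite (?A k)" if "k \<in> {1..<n}" for k
    using that finS finC by auto
  have inj: "inj_on (\<lambda>(a,b). dsum a b) (level S k \<times> level ?C (n-k))" if "k \<in> {1..<n}" for k
  proof (rule inj_onI, clarify)
    fix a b a' b' assume h: "a \<in> level S k" "b \<in> level ?C (n-k)" "a' \<in> level S k" "b' \<in> level ?C (n-k)"
      "dsum a b = dsum a' b'"
    have "a \<noteq> []" "a' \<noteq> []" using h that by (auto simp: level_def)
    moreover have "is_perm b" "is_perm b'" using h closure_perm[OF permS] by (auto simp: level_def)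
    ultimately show "a = a' \<and> b = b'" using uniq h by (auto simp: level_def)
  qed
  have disj: "?A i \<inter> ?A j = {}" if "i \<in> {1..<n}" "j \<in> {1..<n}" "i \<noteq> j" for i j
  proof (rule ccontr)
    assume "?A i \<inter> ?A j \<noteq> {}"
    then obtain a b a' b' where h: "a \<in> level S i" "b \<in> level ?C (n-i)" "a' \<in> level S j" "b' \<in> level ?C (n-j)"
      "dsum a b = dsum a' b'" by auto
    have "a \<noteq> []" "a' \<noteq> []" using h that by (auto simp: level_def)
    moreover have "is_perm b" "is_perm b'" using h closure_perm[OF permS] by (auto simp: level_def)
    ultimately have "a = a'" using uniq h by (auto simp: level_def)
    thus False using h that by (auto simp: level_def)
  qed
  have disj2: "level S n \<inter> (\<Union>k\<in>{1..<n}. ?A k) = {}"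
  proof (rule ccontr)
    assume "level S n \<inter> (\<Union>k\<in>{1..<n}. ?A k) \<noteq> {}"
    then obtain x k a b where h: "x \<in> level S n" "k \<in> {1..<n}" "a \<in> level S k" "b \<in> level ?C (n-k)"
      "x = dsum a b" apply auto by blast
    have h1: "a \<noteq> []" using h(2,3) by (auto simp: level_def)
    have h2: "x \<noteq> []" using h(1) n by (auto simp: level_def)
    have h3: "is_perm b" using h closure_perm[OF permS] by (auto simp: level_def)
    have h4: "dsum a b = dsum x []" using h by simp
    have "a \<in> S" "x \<in> S" using h by (auto simp: level_def)
    hence "a = x" using uniq[of a x b "[]", OF _ _ h1 h2 h3 _ h4] by (simp add: is_perm_def)
    thus False using h by (auto simp: level_def)
  qed
  have fU: "finite (\<Union>k\<in>{1..<n}. ?A k)" using finA by auto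
  have eq: "level ?C n = level S n \<union> (\<Union>k\<in>{1..<n}. ?A k)" using level_closure_eq[OF n] .
  have "card (\<Union>k\<in>{1..<n}. ?A k) = (\<Sum>k\<in>{1..<n}. card (?A k))"
    by (rule card_UN_disjoint) (use finA disj in auto)
  also have "\<dots> = (\<Sum>k\<in>{1..<n}. card (level S k) * card (level ?C (n-k)))"
    by (rule sum.cong) (auto simp: card_image inj card_cartesian_product)
  finally have cU: "card (\<Union>k\<in>{1..<n}. ?A k) = (\<Sum>k\<in>{1..<n}. card (level S k) * card (level ?C (n-k)))" .
  have fSn: "finite (level S n)" using finS n by auto
  show ?thesis unfolding eq using card_Un_disjoint[OF fSn fU disj2] cU fSn fU by simp
qed


lemma pow_split: "k \<le> n \<Longrightarrow> (x::real) ^ n = x ^ k * x ^ (n - k)"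
  by (metis le_add_diff_inverse power_add)

lemma growth:
  fixes s f :: "nat \<Rightarrow> nat" and c :: nat
  assumes sb: "\<And>n. n \<ge> 1 \<Longrightarrow> 1 \<le> s n \<and> s n \<le> c"
    and rec: "\<And>n. n \<ge> 1 \<Longrightarrow> f n = s n + (\<Sum>k\<in>{1..<n}. s k * f (n-k))"
  shows "\<exists>\<gamma>::real. \<gamma> > 1
           \<and> (\<lambda>n. real (s (Suc n)) * \<gamma> powi (- int (Suc n))) sums 1
           \<and> (\<forall>\<delta>::real. \<delta> > 1 \<and> (\<lambda>n. real (s (Suc n)) * \<delta> powi (- int (Suc n))) sums 1
                 \<longrightarrow> \<delta> = \<gamma>)
           \<and> (\<lambda>n. root n (real (f n))) \<longlonglongrightarrow> \<gamma>"
proof -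
  define b where "b k = (if k = 0 then 0 else real (s k))" for k
  define g where "g n = (if n = 0 then 1 else real (f n))" for n
  define F where "F x = (\<Sum>k. b k * x ^ k)" for x :: real
  have b0: "b 0 = 0" by (simp add: b_def)
  have bnn: "0 \<le> b k" for k by (simp add: b_def)
  have bc: "b k \<le> real c" for k using sb[of k] by (auto simp: b_def)
  have b1: "1 \<le> b 1" using sb[of 1] by (simp add: b_def)
  have gnn: "0 \<le> g n" for n by (simp add: g_def)
  have grec: "g n = (\<Sum>k\<in>{1..<Suc n}. b k * g (n - k))" if n: "n \<ge> 1" for n
  proof -
    have "(\<Sum>k\<in>{1..<Suc n}. b k * g (n - k)) = (\<Sum>k\<in>{1..<n}. b k * g (n - k)) + b n * g 0"
      using n by (simp add: sum.atLeastLessThan_Suc)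
    also have "(\<Sum>k\<in>{1..<n}. b k * g (n - k)) = (\<Sum>k\<in>{1..<n}. real (s k * f (n - k)))"
      by (rule sum.cong) (auto simp: b_def g_def)
    finally show ?thesis using n rec[OF n] by (simp add: g_def b_def)
  qed
  have summ: "summable (\<lambda>k. b k * x ^ k)" if "0 \<le> x" "x < 1" for x :: real
  proof (rule summable_comparison_test[where g="\<lambda>k. real c * x ^ k"])
    show "\<exists>N. \<forall>n\<ge>N. norm (b n * x ^ n) \<le> real c * x ^ n"
      using that bnn bc by (auto intro!: mult_right_mono)
    show "summable (\<lambda>k. real c * x ^ k)" using that by (intro summable_mult summable_geometric) auto
  qed
  have Fsums: "(\<lambda>k. b k * x ^ k) sums F x" if "0 \<le> x" "x < 1" for x
    using summable_sums[OF summ[OF that]] by (simp add: F_def)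
  have F0: "F 0 = 0" by (simp add: F_def b0)
  have Fmono: "F x < F y" if "0 \<le> x" "x < y" "y < 1" for x y :: real
  proof -
    have "0 < (\<Sum>k. b k * y ^ k - b k * x ^ k)"
    proof (rule suminf_pos2[where i=1])
      show "summable (\<lambda>k. b k * y ^ k - b k * x ^ k)"
        using that by (intro summable_diff summ) auto
      show "0 \<le> b k * y ^ k - b k * x ^ k" for k
        using that bnn by (auto intro!: mult_left_mono power_mono)
      show "0 < b 1 * y ^ 1 - b 1 * x ^ 1" using that b1
        by (simp add: right_diff_distrib[symmetric])
    qed
    also have "\<dots> = F y - F x" unfolding F_def
      using suminf_diff[OF summ[of y] summ[of x]] that by simp
    finally show ?thesis by simp
  qed
  have cont: "isCont F x" if "0 \<le> x" "x \<le> 3/4" for x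
    unfolding F_def
    by (rule isCont_powser[where K="7/8"]) (use summ[of "7/8"] that in auto)
  have F34: "1 \<le> F (3/4)"
  proof -
    have "(\<Sum>k<3. b k * (3/4) ^ k) \<le> F (3/4)" unfolding F_def
      by (rule sum_le_suminf) (use summ[of "3/4"] bnn in auto)
    moreover have "(\<Sum>k<3. b k * (3/4::real) ^ k) = b 1 * (3/4) + b 2 * (9/16)"
      by (simp add: numeral_3_eq_3 numeral_2_eq_2 b0)
    moreover have "1 \<le> b 2" using sb[of 2] by (simp add: b_def)
    ultimately show ?thesis using b1 by linarith
  qed
  obtain \<rho> where \<rho>: "0 \<le> \<rho>" "\<rho> \<le> 3/4" "F \<rho> = 1"
    using IVT[of F 0 1 "3/4"] F0 F34 cont by auto
  have \<rho>pos: "0 < \<rho>" using \<rho> F0 by (cases "\<rho> = 0") auto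
  define \<gamma> where "\<gamma> = 1 / \<rho>"
  have \<gamma>1: "\<gamma> > 1" using \<rho> \<rho>pos by (simp add: \<gamma>_def)
  have conv: "(\<lambda>n. real (s (Suc n)) * \<delta> powi (- int (Suc n))) sums 1 \<longleftrightarrow> F (1/\<delta>) = 1"
    if "\<delta> > 1" for \<delta> :: real
  proof -
    have eq: "(\<lambda>n. real (s (Suc n)) * \<delta> powi (- int (Suc n))) = (\<lambda>n. b (Suc n) * (1/\<delta>) ^ (Suc n))"
    proof (rule ext)
      fix n
      have "\<delta> powi (- int (Suc n)) = (1/\<delta>) ^ (Suc n)"
        by (simp only: power_int_minus power_int_of_nat) (simp add: power_one_over inverse_eq_divide)
      thus "real (s (Suc n)) * \<delta> powi (- int (Suc n)) = b (Suc n) * (1/\<delta>) ^ (Suc n)"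
        by (simp add: b_def)
    qed
    have "(\<lambda>n. b (Suc n) * (1/\<delta>) ^ (Suc n)) sums 1 \<longleftrightarrow> (\<lambda>n. b n * (1/\<delta>) ^ n) sums 1"
      using sums_Suc_iff[of "\<lambda>n. b n * (1/\<delta>) ^ n" 1] by (simp add: b0)
    also have "\<dots> \<longleftrightarrow> F (1/\<delta>) = 1"
      using Fsums[of "1/\<delta>"] that sums_unique2 by auto
    finally show ?thesis using eq by simp
  qed
  have part2: "(\<lambda>n. real (s (Suc n)) * \<gamma> powi (- int (Suc n))) sums 1"
    using conv[OF \<gamma>1] \<rho> by (simp add: \<gamma>_def)
  have part3: "\<delta> = \<gamma>" if "\<delta> > 1" "(\<lambda>n. real (s (Suc n)) * \<delta> powi (- int (Suc n))) sums 1" for \<delta>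
  proof -
    have F1: "F (1/\<delta>) = 1" using conv that by blast
    have r: "0 \<le> 1/\<delta>" "1/\<delta> < 1" using that by auto
    have "1/\<delta> = \<rho>"
    proof (rule ccontr)
      assume "1/\<delta> \<noteq> \<rho>"
      hence "1/\<delta> < \<rho> \<or> \<rho> < 1/\<delta>" by linarith
      thus False using Fmono[of "1/\<delta>" \<rho>] Fmono[of \<rho> "1/\<delta>"] r \<rho> F1 by auto
    qed
    thus ?thesis using that unfolding \<gamma>_def by (metis divide_divide_eq_right div_by_1 mult_1)
  qed
  have upper: "g n * \<rho> ^ n \<le> 1" for n
  proof (induction n rule: less_induct)
    case (less n)
    show ?case
    proof (cases "n = 0")
      case True thus ?thesis by (simp add: g_def)
    next
      case False
      hence n: "n \<ge> 1" by simp
      have "g n * \<rho> ^ n = (\<Sum>k\<in>{1..<Suc n}. b k * \<rho> ^ k * (g (n - k) * \<rho> ^ (n - k)))"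
        unfolding grec[OF n] sum_distrib_right
        by (rule sum.cong) (auto simp: pow_split[of _ n \<rho>])
      also have "\<dots> \<le> (\<Sum>k\<in>{1..<Suc n}. b k * \<rho> ^ k)"
        by (rule sum_mono) (use less \<rho> bnn in \<open>auto intro!: mult_left_le\<close>)
      also have "\<dots> \<le> (\<Sum>k<Suc n. b k * \<rho> ^ k)"
        by (rule sum_mono2) (use bnn \<rho> in auto)
      also have "\<dots> \<le> F \<rho>" unfolding F_def
        by (rule sum_le_suminf) (use summ[of \<rho>] bnn \<rho> in auto)
      finally show ?thesis using \<rho> by simp
    qed
  qed
  have gge1: "1 \<le> g n" for n
  proof (induction n)
    case 0 thus ?case by (simp add: g_def)
  next
    case (Suc m)
    have "b 1 * g (Suc m - 1) \<le> (\<Sum>k\<in>{1..<Suc (Suc m)}. b k * g (Suc m - k))"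
      by (rule member_le_sum) (use bnn gnn in auto)
    moreover have "1 \<le> b 1 * g (Suc m - 1)" using b1 Suc by (metis One_nat_def diff_Suc_1 mult_mono mult_1 zero_le_one order_trans)
    ultimately show ?case using grec[of "Suc m"] by simp
  qed
  have lower: "r ^ N \<le> g n * r ^ n" if r: "0 < r" "r < 1" and N: "1 \<le> (\<Sum>k<Suc N. b k * r ^ k)" for r N n
  proof (induction n rule: less_induct)
    case (less n)
    show ?case
    proof (cases "n \<le> N")
      case True
      have "r ^ N \<le> r ^ n" using True r by (intro power_decreasing) auto
      also have "\<dots> \<le> g n * r ^ n" using gge1[of n] r by simp
      finally show ?thesis .
    next
      case False
      hence n: "n \<ge> 1" by simp
      have NS: "(\<Sum>k<Suc N. b k * r ^ k) = (\<Sum>k\<in>{1..<Suc N}. b k * r ^ k)"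
        by (simp add: lessThan_atLeast0 sum.atLeast_Suc_lessThan b0)
      have "r ^ N \<le> r ^ N * (\<Sum>k\<in>{1..<Suc N}. b k * r ^ k)"
        using N NS r by simp
      also have "\<dots> = (\<Sum>k\<in>{1..<Suc N}. b k * r ^ k * r ^ N)"
        by (simp add: sum_distrib_left mult.commute del: sum.op_ivl_Suc)
      also have "\<dots> \<le> (\<Sum>k\<in>{1..<Suc N}. b k * r ^ k * (g (n - k) * r ^ (n - k)))"
        by (rule sum_mono) (use less False r bnn in \<open>auto intro!: mult_left_mono\<close>)
      also have "\<dots> \<le> (\<Sum>k\<in>{1..<Suc n}. b k * r ^ k * (g (n - k) * r ^ (n - k)))"
        by (rule sum_mono2) (use bnn r gnn False in auto)
      also have "\<dots> = g n * r ^ n"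
        unfolding grec[OF n] sum_distrib_right
        apply (rule sum.cong, simp) subgoal for k using pow_split[of k n r] by simp done
      finally show ?thesis .
    qed
  qed
  have lim: "(\<lambda>n. root n (real (f n))) \<longlonglongrightarrow> \<gamma>"
  proof (rule order_tendstoI)
    fix a assume a: "\<gamma> < a"
    have "root n (real (f n)) < a" if n: "n \<ge> 1" for n
    proof -
      have "g n \<le> \<gamma> ^ n" using upper[of n] \<rho>pos
        by (simp add: \<gamma>_def power_one_over field_simps)
      hence "root n (g n) \<le> root n (\<gamma> ^ n)" using n by (intro real_root_le_mono) auto
      also have "\<dots> = \<gamma>" using n \<gamma>1 by (intro real_root_power_cancel) auto
      finally show ?thesis using n a by (simp add: g_def)
    qed
    thus "eventually (\<lambda>n. root n (real (f n)) < a) sequentially"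
      unfolding eventually_sequentially by blast
  next
    fix a assume a: "a < \<gamma>"
    define \<gamma>' where "\<gamma>' = max ((a + \<gamma>)/2) ((1 + \<gamma>)/2)"
    have g': "a < \<gamma>'" "\<gamma>' < \<gamma>" "1 < \<gamma>'" using a \<gamma>1 unfolding \<gamma>'_def by (simp_all add: less_max_iff_disj max_less_iff_conj)
    define r where "r = 1 / \<gamma>'"
    have r: "0 < r" "r < 1" "\<rho> < r" using g' \<rho>pos by (auto simp: r_def \<gamma>_def field_simps)
    have "F \<rho> < F r" using Fmono[of \<rho> r] r \<rho> by auto
    hence Fr: "1 < F r" using \<rho> by simp
    have "(\<lambda>n. \<Sum>k<n. b k * r ^ k) \<longlonglongrightarrow> F r" using Fsums[of r] r by (simp add: sums_def)
    from order_tendstoD(1)[OF this Fr] obtain N where "1 < (\<Sum>k<N. b k * r ^ k)"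
      unfolding eventually_sequentially by auto
    moreover have "(\<Sum>k<N. b k * r ^ k) \<le> (\<Sum>k<Suc N. b k * r ^ k)"
      using bnn r by simp
    ultimately have N: "1 \<le> (\<Sum>k<Suc N. b k * r ^ k)" by linarith
    have "(\<lambda>n. root n (r ^ N) * \<gamma>') \<longlonglongrightarrow> 1 * \<gamma>'"
      using r by (intro tendsto_mult LIMSEQ_root_const tendsto_const) auto
    from order_tendstoD(1)[OF this] g' have ev: "eventually (\<lambda>n. a < root n (r ^ N) * \<gamma>') sequentially"
      by simp
    have "a < root n (real (f n))" if n: "n \<ge> 1" and h: "a < root n (r ^ N) * \<gamma>'" for n
    proof -
      have "r ^ N \<le> g n * r ^ n" using lower[OF r(1,2) N] .
      hence "r ^ N * \<gamma>' ^ n \<le> g n" using r g'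
        by (simp add: r_def power_one_over field_simps)
      hence "root n (r ^ N * \<gamma>' ^ n) \<le> root n (g n)" using n by (intro real_root_le_mono) auto
      moreover have "root n (r ^ N * \<gamma>' ^ n) = root n (r ^ N) * \<gamma>'"
        using n g' by (simp add: real_root_mult real_root_power_cancel)
      ultimately show ?thesis using h n by (simp add: g_def)
    qed
    thus "eventually (\<lambda>n. a < root n (real (f n))) sequentially"
      using ev unfolding eventually_sequentially by (metis le_trans nat_le_linear)
  qed
  show ?thesis using \<gamma>1 part2 part3 lim by blast
qed

theorem lemma3p1:
  fixes S :: "nat list set" and c :: nat
  assumes indec: "\<forall>sigma \<in> S. is_perm sigma \<and> indecomposable sigma"
    and down: "\<And>sigma tau. sigma \<in> S \<Longrightarrow> is_perm tau \<Longrightarrow> subperm tau sigma \<Longrightarrow>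
                 indecomposable tau \<Longrightarrow> tau \<in> S"
    and bounded: "\<And>n. n \<ge> 1 \<Longrightarrow> 1 \<le> card (level S n) \<and> card (level S n) \<le> c"
  shows "\<exists>\<gamma>::real. \<gamma> > 1
           \<and> (\<lambda>n. real (card (level S (Suc n))) * \<gamma> powi (- int (Suc n))) sums 1
           \<and> (\<forall>\<delta>::real. \<delta> > 1 \<and> (\<lambda>n. real (card (level S (Suc n))) * \<delta> powi (- int (Suc n))) sums 1
                 \<longrightarrow> \<delta> = \<gamma>)
           \<and> (\<lambda>n. root n (real (card (level (sum_closure S) n)))) \<longlonglongrightarrow> \<gamma>"
proof -
  have finS: "finite (level S k)" if "k \<ge> 1" for k
    using bounded[OF that] card_gt_0_iff[of "level S k"] by auto
  have finC: "n \<ge> 1 \<longrightarrow> finite (level (sum_closure S) n)" for n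
  proof (induction n rule: less_induct)
    case (less n)
    show ?case using card_level_closure[OF indec _ finS, of n] less by auto
  qed
  have rec: "card (level (sum_closure S) n) = card (level S n) +
     (\<Sum>k\<in>{1..<n}. card (level S k) * card (level (sum_closure S) (n-k)))" if "n \<ge> 1" for n
    using card_level_closure[OF indec that finS] finC by auto
  show ?thesis
    by (rule growth[where s="\<lambda>n. card (level S n)" and f="\<lambda>n. card (level (sum_closure S) n)"])
      (use bounded rec in auto)
qed

end
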